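(* Let $n\ge2$, $A\in\mathbb{R}^{n\times n}$ symmetric with eigenvalues $\lambda_1\ge\dots\ge\lambda_n$, $\rho=\lambda_1-\lambda_n$, $\gamma>0$, and suppose $\beta\ge\frac{8n}{n-1}(1+\gamma)\rho\,n^{3/2}$. Then $f(\mathbf{z})=\frac12\mathbf{z}^TA\mathbf{z}+\frac{\beta}{2}\sum_kz_k^4$ on $\mathbb{S}^{n-1}$ is $(C_\gamma\rho,\frac{\gamma}{\sqrt2}\rho,C_\gamma\rho)$-strict-saddle, where $C_\gamma=\frac{4}{n-1}(1+\gamma)n^{3/2}-1$.
   Context: $\mathbb{S}^{n-1}$ is the unit sphere in $\mathbb{R}^n$, $\mathcal{T}_{\mathbf{z}}=\{\mathbf{v}:\mathbf{v}^T\mathbf{z}=0\}$. For $\mathbf{z}\in\mathbb{S}^{n-1}$ let $2\lambda=\mathbf{z}^TA\mathbf{z}+2\beta\|\mathbf{z}\|_4^4$, $\mathrm{grad} f(\mathbf{z})=[A+2\beta\,\mathrm{diag}(z_1^2,\dots,z_n^2)]\mathbf{z}-2\lambda\mathbf{z}$, and $H_f(\mathbf{z})[\mathbf{v}]=\mathbf{v}^T[A+6\beta\,\mathrm{diag}(z_1^2,\dots,z_n^2)-2\lambda I]\mathbf{v}$. For $\xi,\epsilon,\zeta>0$, $f$ is $(\xi,\epsilon,\zeta)$-strict-saddle if for every $\mathbf{z}\in\mathbb{S}^{n-1}$ at least one holds: (1) $H_f(\mathbf{z})[\mathbf{v}]\ge\xi$ for all $\mathbf{v}\in\mathcal{T}_{\mathbf{z}}\cap\mathbb{S}^{n-1}$;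 (2) $\|\mathrm{grad} f(\mathbf{z})\|\ge\epsilon$; (3) there is $\mathbf{v}\in\mathcal{T}_{\mathbf{z}}\cap\mathbb{S}^{n-1}$ with $H_f(\mathbf{z})[\mathbf{v}]\le-\zeta$. *)

theory Defs
  imports "HOL-Analysis.Analysis"
begin

definition symmetric_mat :: "real^'n^'n \<Rightarrow> bool" where
  "symmetric_mat A \<longleftrightarrow> transpose A = A"

definition eigenvalues :: "real^'n^'n \<Rightarrow> real set" where
  "eigenvalues A = {l. \<exists>v. v \<noteq> 0 \<and> A *v v = l *\<^sub>R v}"

definition spread :: "real^'n^'n \<Rightarrow> real" where
  "spread A = Max (eigenvalues A) - Min (eigenvalues A)"

definition diag_sq :: "real^'n \<Rightarrow> real^'n^'n" where
  "diag_sq z = (\<chi> i j. if i = j then (z$i)^2 else 0)"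

definition lam :: "real^'n^'n \<Rightarrow> real \<Rightarrow> real^'n \<Rightarrow> real" where
  "lam A \<beta> z = (z \<bullet> (A *v z) + 2 * \<beta> * (\<Sum>k\<in>UNIV. (z$k)^4)) / 2"

definition rgrad :: "real^'n^'n \<Rightarrow> real \<Rightarrow> real^'n \<Rightarrow> real^'n" where
  "rgrad A \<beta> z = (A + (2 * \<beta>) *\<^sub>R diag_sq z) *v z - (2 * lam A \<beta> z) *\<^sub>R z"

definition rhess :: "real^'n^'n \<Rightarrow> real \<Rightarrow> real^'n \<Rightarrow> real^'n \<Rightarrow> real" where
  "rhess A \<beta> z v = v \<bullet> ((A + (6 * \<beta>) *\<^sub>R diag_sq z - (2 * lam A \<beta> z) *\<^sub>R mat 1) *v v)"

text \<open>(xi, eps, zeta)-strict-saddle property of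
  f(z) = 1/2 z^T A z + beta/2 sum_k z_k^4 on the unit sphere.\<close>
definition strict_saddle :: "real^'n^'n \<Rightarrow> real \<Rightarrow> real \<Rightarrow> real \<Rightarrow> real \<Rightarrow> bool" where
  "strict_saddle A \<beta> \<xi> \<epsilon> \<zeta> \<longleftrightarrow>
     (\<forall>z. norm z = 1 \<longrightarrow>
        (\<forall>v. v \<bullet> z = 0 \<and> norm v = 1 \<longrightarrow> rhess A \<beta> z v \<ge> \<xi>)
      \<or> norm (rgrad A \<beta> z) \<ge> \<epsilon>
      \<or> (\<exists>v. v \<bullet> z = 0 \<and> norm v = 1 \<and> rhess A \<beta> z v \<le> - \<zeta>))"

end

theory Submission
  imports Defs
begin

lemma sym_inner:
  fixes A :: "real^'n^'n"
  assumes "symmetric_mat A"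
  shows "x \<bullet> (A *v y) = y \<bullet> (A *v x)"
proof -
  have "x v* A = transpose A *v x"
    by (simp add: vec_eq_iff vector_matrix_mult_def matrix_vector_mult_def transpose_def mult.commute)
  then have "x \<bullet> (A *v y) = (A *v x) \<bullet> y"
    using assms unfolding symmetric_mat_def by (metis dot_lmul_matrix)
  then show ?thesis by (simp add: inner_commute)
qed

lemma mv_scale:
  fixes A :: "real^'n^'n"
  shows "A *v (k *\<^sub>R v) = k *\<^sub>R (A *v v)"
  by (simp add: vec_eq_iff matrix_vector_mult_def sum_distrib_left algebra_simps)

lemma eig_from_max:
  fixes A :: "real^'n^'n"
  assumes sym: "symmetric_mat A" and le: "\<And>u. u \<bullet> (A *v u) \<le> M * (u \<bullet> u)"
    and eq: "x \<bullet> (A *v x) = M * (x \<bullet> x)"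
  shows "A *v x = M *\<^sub>R x"
proof -
  define w where "w = A *v x - M *\<^sub>R x"
  define c where "c = w \<bullet> w"
  define d where "d = w \<bullet> (A *v w) - M * (w \<bullet> w)"
  have key: "2 * t * c + t^2 * d \<le> 0" for t :: real
  proof -
    have h: "(x + t *\<^sub>R w) \<bullet> (A *v (x + t *\<^sub>R w)) \<le> M * ((x + t *\<^sub>R w) \<bullet> (x + t *\<^sub>R w))"
      by (rule le)
    have s: "x \<bullet> (A *v w) = w \<bullet> (A *v x)" by (rule sym_inner[OF sym])
    have e1: "(x + t *\<^sub>R w) \<bullet> (A *v (x + t *\<^sub>R w)) = x \<bullet> (A *v x) + 2 * t * (w \<bullet> (A *v x)) + t^2 * (w \<bullet> (A *v w))"
      using s by (simp add: matrix_vector_right_distrib inner_add_left inner_add_right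
          mv_scale power2_eq_square algebra_simps)
    have e2: "(x + t *\<^sub>R w) \<bullet> (x + t *\<^sub>R w) = x \<bullet> x + 2 * t * (w \<bullet> x) + t^2 * (w \<bullet> w)"
      by (simp add: inner_add_left inner_add_right inner_commute power2_eq_square algebra_simps)
    have ceq: "c = w \<bullet> (A *v x) - M * (w \<bullet> x)" unfolding c_def w_def
      by (simp add: inner_diff_right)
    have c2: "2 * t * c = 2 * t * (w \<bullet> (A *v x)) - M * (2 * t * (w \<bullet> x))" unfolding ceq by (simp add: algebra_simps)
    have d2: "t^2 * d = t^2 * (w \<bullet> (A *v w)) - M * (t^2 * (w \<bullet> w))" unfolding d_def by (simp add: algebra_simps)
    have "M * ((x + t *\<^sub>R w) \<bullet> (x + t *\<^sub>R w)) = M * (x \<bullet> x) + M * (2 * t * (w \<bullet> x)) + M * (t^2 * (w \<bullet> w))"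
      unfolding e2 by (simp add: algebra_simps)
    then show ?thesis using h eq unfolding e1 c2 d2 by linarith
  qed
  have "c = 0"
  proof (rule ccontr)
    assume "c \<noteq> 0"
    then have cp: "c > 0" unfolding c_def by simp
    define t where "t = c / (\<bar>d\<bar> + 1)"
    have tp: "t > 0" using cp by (simp add: t_def add_pos_nonneg)
    have "t * (\<bar>d\<bar> + 1) = c" unfolding t_def by (simp add: add_pos_nonneg)
    have "t^2 * (-\<bar>d\<bar>) \<le> t^2 * d" by (rule mult_left_mono) auto
    then have "t^2 * d \<ge> - (t^2 * \<bar>d\<bar>)" by simp
    moreover have "t^2 * \<bar>d\<bar> \<le> t * c"
      using \<open>t * (\<bar>d\<bar> + 1) = c\<close> tp by (simp add: power2_eq_square algebra_simps)  
    ultimately have "2 * t * c + t^2 * d \<ge> t * c" by linarith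
    moreover have "t * c > 0" using tp cp by simp
    ultimately show False using key[of t] by linarith
  qed
  then have "w = 0" unfolding c_def by simp
  then show ?thesis unfolding w_def by simp
qed

lemma eig_finite:
  fixes A :: "real^'n^'n"
  assumes sym: "symmetric_mat A"
  shows "finite (eigenvalues A)"
proof -
  define f where "f l = (SOME v. v \<noteq> 0 \<and> A *v v = l *\<^sub>R v)" for l
  have fP: "f l \<noteq> 0 \<and> A *v f l = l *\<^sub>R f l" if "l \<in> eigenvalues A" for l
  proof -
    from that have "\<exists>v. v \<noteq> 0 \<and> A *v v = l *\<^sub>R v" by (simp add: eigenvalues_def)
    then show ?thesis unfolding f_def by (rule someI_ex)
  qed
  have inj: "inj_on f (eigenvalues A)"
  proof (rule inj_onI)
    fix a b assume a: "a \<in> eigenvalues A" and b: "b \<in> eigenvalues A" and "f a = f b"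
    then have "a *\<^sub>R f a = b *\<^sub>R f a" using fP[OF a] fP[OF b] by metis
    then show "a = b" using fP[OF a] by (metis scaleR_cancel_right)
  qed
  have "pairwise orthogonal (f ` eigenvalues A)"
  proof (rule pairwiseI)
    fix x y assume "x \<in> f ` eigenvalues A" "y \<in> f ` eigenvalues A" "x \<noteq> y"
    then obtain a b where a: "a \<in> eigenvalues A" and b: "b \<in> eigenvalues A" and xy: "x = f a" "y = f b" "a \<noteq> b"
      by auto
    have "x \<bullet> (A *v y) = y \<bullet> (A *v x)" by (rule sym_inner[OF sym])
    moreover have "x \<bullet> (A *v y) = b * (x \<bullet> y)" using fP[OF b] xy by simp
    moreover have "y \<bullet> (A *v x) = a * (x \<bullet> y)" using fP[OF a] xy by (metis inner_commute inner_scaleR_right)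
    ultimately have "b * (x \<bullet> y) = a * (x \<bullet> y)" by simp
    then have "x \<bullet> y = 0" using xy(3) by simp
    then show "orthogonal x y" by (simp add: orthogonal_def)
  qed
  then have "finite (f ` eigenvalues A)" by (rule pairwise_orthogonal_imp_finite)
  then show ?thesis using inj finite_imageD by blast
qed

lemma rayleigh_aux:
  fixes A :: "real^'n^'n"
  assumes sym: "symmetric_mat A"
  shows "\<exists>M \<in> eigenvalues A. \<forall>u. u \<bullet> (A *v u) \<le> M * (u \<bullet> u)"
proof -
  let ?q = "\<lambda>x::real^'n. x \<bullet> (A *v x)"
  have cont: "continuous_on (sphere 0 1) ?q"
    by (intro continuous_intros linear_continuous_on matrix_vector_mul_linear bounded_linear_inner_left)
  have ne: "sphere (0::real^'n) 1 \<noteq> {}" by simp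
  obtain x0 where x0: "x0 \<in> sphere 0 1" and mx: "\<And>y. y \<in> sphere 0 1 \<Longrightarrow> ?q y \<le> ?q x0"
    using continuous_attains_sup[OF compact_sphere ne cont] by blast
  define M where "M = ?q x0"
  have le: "?q u \<le> M * (u \<bullet> u)" for u
  proof (cases "u = 0")
    case True then show ?thesis by simp
  next
    case False
    define y where "y = (1 / norm u) *\<^sub>R u"
    have "y \<in> sphere 0 1" using False by (simp add: y_def)
    then have "?q y \<le> M" using mx M_def by simp
    moreover have "?q y = ?q u / (norm u)^2"
      by (simp add: y_def mv_scale power2_eq_square)
    ultimately have "?q u / (norm u)^2 \<le> M" by simp
    then have "?q u \<le> M * (norm u)^2" using False by (simp add: divide_le_eq)
    then show ?thesis by (simp add: power2_norm_eq_inner)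
  qed
  have x0n: "x0 \<bullet> x0 = 1" using x0 by (simp add: norm_eq_1)
  then have "?q x0 = M * (x0 \<bullet> x0)" by (simp add: M_def)
  then have "A *v x0 = M *\<^sub>R x0" using eig_from_max[OF sym le] by blast
  moreover have "x0 \<noteq> 0" using x0 by auto
  ultimately have "M \<in> eigenvalues A" unfolding eigenvalues_def by blast
  then show ?thesis using le by blast
qed

lemma rayleigh:
  fixes A :: "real^'n^'n"
  assumes sym: "symmetric_mat A"
  shows "x \<bullet> (A *v x) \<le> Max (eigenvalues A) * (x \<bullet> x)"
    and "x \<bullet> (A *v x) \<ge> Min (eigenvalues A) * (x \<bullet> x)"
proof -
  have fin: "finite (eigenvalues A)" by (rule eig_finite[OF sym])
  have xx: "x \<bullet> x \<ge> 0" by simp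
  obtain M where M: "M \<in> eigenvalues A" "\<forall>u. u \<bullet> (A *v u) \<le> M * (u \<bullet> u)"
    using rayleigh_aux[OF sym] by blast
  have "M \<le> Max (eigenvalues A)" using fin M(1) by simp
  then have "M * (x \<bullet> x) \<le> Max (eigenvalues A) * (x \<bullet> x)" using xx by (rule mult_right_mono)
  then show "x \<bullet> (A *v x) \<le> Max (eigenvalues A) * (x \<bullet> x)"
    using M(2) by (metis order_trans)
  have neg: "(-A) *v v = - (A *v v)" for v
    by (simp add: vec_eq_iff matrix_vector_mult_def sum_negf)
  have "symmetric_mat (-A)" using sym unfolding symmetric_mat_def
    by (simp add: vec_eq_iff transpose_def)
  then obtain N where N: "N \<in> eigenvalues (-A)" "\<forall>u. u \<bullet> ((-A) *v u) \<le> N * (u \<bullet> u)"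
    using rayleigh_aux by blast
  from N(1) obtain v where v: "v \<noteq> 0" "- (A *v v) = N *\<^sub>R v" unfolding eigenvalues_def neg by blast
  have "A *v v = - (N *\<^sub>R v)" using v(2) by (metis minus_minus)
  then have "A *v v = (-N) *\<^sub>R v" by simp
  then have "-N \<in> eigenvalues A" using v(1) unfolding eigenvalues_def by blast
  then have "Min (eigenvalues A) \<le> -N" using fin by simp
  then have "Min (eigenvalues A) * (x \<bullet> x) \<le> (-N) * (x \<bullet> x)" using xx by (rule mult_right_mono)
  moreover have "x \<bullet> (A *v x) \<ge> (-N) * (x \<bullet> x)" using N(2) neg[of x] by (metis inner_minus_right minus_le_iff mult_minus_left)
  ultimately show "x \<bullet> (A *v x) \<ge> Min (eigenvalues A) * (x \<bullet> x)"
    by linarith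
qed
lemma diag_mv: "(diag_sq z *v v) $ i = (z$i)^2 * v$i"
proof -
  have e: "(if i = j then (z$i)^2 else 0) * v$j = (if i = j then (z$i)^2 * v$j else 0)" for j
    by simp
  show ?thesis by (simp add: diag_sq_def matrix_vector_mult_def e)
qed

lemma hess_eq:
  assumes "v \<bullet> v = 1"
  shows "rhess A \<beta> z v = v \<bullet> (A *v v) - z \<bullet> (A *v z)
     + 2 * \<beta> * (3 * (\<Sum>i\<in>UNIV. (z$i)^2 * (v$i)^2) - (\<Sum>k\<in>UNIV. (z$k)^4))"
proof -
  have m: "(A + (6 * \<beta>) *\<^sub>R diag_sq z - (2 * lam A \<beta> z) *\<^sub>R mat 1) *v v
     = A *v v + (6 * \<beta>) *\<^sub>R (diag_sq z *v v) - (2 * lam A \<beta> z) *\<^sub>R v"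
    by (simp add: matrix_vector_mult_diff_rdistrib matrix_vector_mult_add_rdistrib
        scaleR_matrix_vector_assoc[symmetric] matrix_vector_mul_lid)
  have d: "v \<bullet> (diag_sq z *v v) = (\<Sum>i\<in>UNIV. (z$i)^2 * (v$i)^2)"
    by (simp add: inner_vec_def diag_mv power2_eq_square algebra_simps)
  show ?thesis unfolding rhess_def m
    by (simp add: inner_add_right inner_diff_right d assms lam_def algebra_simps)
qed

lemma grad_eq:
  assumes "z \<bullet> z = 1"
  shows "rgrad A \<beta> z = (A *v z - (z \<bullet> (A *v z)) *\<^sub>R z)
     + (2 * \<beta>) *\<^sub>R (\<chi> i. (z$i)^3 - (\<Sum>k\<in>UNIV. (z$k)^4) * z$i)"
proof -
  have "(A + (2 * \<beta>) *\<^sub>R diag_sq z) *v z = A *v z + (2 * \<beta>) *\<^sub>R (diag_sq z *v z)"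
    by (simp add: matrix_vector_mult_add_rdistrib scaleR_matrix_vector_assoc[symmetric])
  then show ?thesis unfolding rgrad_def lam_def
    by (simp add: vec_eq_iff diag_mv algebra_simps power3_eq_cube power2_eq_square)
qed

lemma delta_sum:
  fixes z :: "real^'n"
  shows "(\<Sum>k\<in>UNIV. ((if k = j then 1 else 0) - t * z$k) * f k) = f j - t * (\<Sum>k\<in>UNIV. z$k * f k)"
proof -
  have "(\<Sum>k\<in>UNIV. ((if k = j then 1 else 0) - t * z$k) * f k)
      = (\<Sum>k\<in>UNIV. (if k = j then f k else 0)) - (\<Sum>k\<in>UNIV. t * (z$k * f k))"
  proof -
    have e: "((if k = j then 1 else 0) - t * z$k) * f k = (if k = j then f k else 0) - t * (z$k * f k)" for k
      by (simp add: algebra_simps)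
    show ?thesis by (simp only: e sum_subtractf)
  qed
  then show ?thesis by (simp add: sum_distrib_left)
qed

lemma gap:
  fixes n \<mu> s \<beta> K :: real
  assumes n: "n \<ge> 2" and mu: "\<mu> \<ge> 0" and s: "s \<ge> 1/n"
    and h1: "6 * \<mu> - s > -1/(4*n)" and h2: "3 * \<mu> - s < 1/(4*n)"
    and hw: "4 * \<beta>^2 * (\<mu> * (\<mu> - s)^2) < K" and hb: "\<beta>^2 \<ge> 64 * K * n^3" and K: "K > 0"
  shows False
proof -
  have np: "n > 0" using n by simp
  have m1: "\<mu> \<ge> 1/(8*n)"
  proof -
    have "6 * \<mu> > 1/n - 1/(4*n)" using h1 s by linarith
    also have "1/n - 1/(4*n) = 6 * (1/(8*n))" using np by (simp add: field_simps)
    finally show ?thesis by simp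
  qed
  have m2: "s - \<mu> \<ge> 7/(12*n)"
  proof -
    have "3 * (s - \<mu>) = 3 * s - 3 * \<mu>" by simp
    then have "3 * (s - \<mu>) > 2 * s - 1/(4*n)" using h2 by linarith
    moreover have "2 * s \<ge> 2 / n" using s by (simp add: divide_simps)
    moreover have "2/n - 1/(4*n) = 3 * (7/(12*n))" using np by (simp add: field_simps)
    ultimately have "3 * (7/(12*n)) < 3 * (s - \<mu>)" by linarith
    then show ?thesis by simp
  qed
  have "(7/(12*n))^2 \<le> (s - \<mu>)^2"
    using m2 np by (intro power_mono) auto
  then have "(7/(12*n))^2 \<le> (\<mu> - s)^2" by (simp add: power2_commute)
  then have P: "(1/(8*n)) * (7/(12*n))^2 \<le> \<mu> * (\<mu> - s)^2"
    using m1 np mu by (intro mult_mono) auto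
  have "64 * K * n^3 * ((1/(8*n)) * (7/(12*n))^2) \<le> \<beta>^2 * (\<mu> * (\<mu> - s)^2)"
    by (rule mult_mono[OF hb P]) (use np in auto)
  moreover have "64 * K * n^3 * ((1/(8*n)) * (7/(12*n))^2) = K * (49/18)"
    using np by (simp add: field_simps power2_eq_square power3_eq_cube)
  ultimately have "K * (49/18) \<le> \<beta>^2 * (\<mu> * (\<mu> - s)^2)" by linarith
  moreover have "4 * \<beta>^2 * (\<mu> * (\<mu> - s)^2) = 4 * (\<beta>^2 * (\<mu> * (\<mu> - s)^2))" by simp
  ultimately show False using hw K by linarith
qed

theorem theorem12:
  fixes A :: "real^'n^'n" and \<beta> \<gamma> :: real
  assumes "CARD('n) \<ge> 2"
    and "symmetric_mat A"
    and "\<gamma> > 0"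
    and "\<beta> \<ge> 8 * real CARD('n) / (real CARD('n) - 1) * (1 + \<gamma>) * spread A * real CARD('n) powr (3/2)"
  shows "let n = real CARD('n); \<rho> = spread A;
             C = 4 / (n - 1) * (1 + \<gamma>) * n powr (3/2) - 1
         in strict_saddle A \<beta> (C * \<rho>) (\<gamma> / sqrt 2 * \<rho>) (C * \<rho>)"
proof -
  define n where "n = real CARD('n)"
  define \<rho> where "\<rho> = spread A"
  define C where "C = 4 / (n - 1) * (1 + \<gamma>) * n powr (3/2) - 1"
  have main: "strict_saddle A \<beta> (C * \<rho>) (\<gamma> / sqrt 2 * \<rho>) (C * \<rho>)"
  proof (cases "\<rho> > 0")
    case False
    have "\<gamma> / sqrt 2 \<ge> 0" using assms(3) by simp
    moreover have "\<rho> \<le> 0" using False by simp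
    ultimately have "\<gamma> / sqrt 2 * \<rho> \<le> 0" by (rule mult_nonneg_nonpos)
    then show ?thesis unfolding strict_saddle_def by (meson norm_ge_zero order_trans)
  next
    case rp: True
    have n2: "n \<ge> 2" using assms(1) n_def by simp
    define P where "P = n powr (3/2)"
    have P0: "P > 0" using n2 by (simp add: P_def)
    have P2: "P^2 = n^3" unfolding P_def using n2
      by (simp add: power2_eq_square powr_add[symmetric] powr_numeral)
    have hb0: "\<beta> \<ge> 8 * n / (n - 1) * (1 + \<gamma>) * \<rho> * P"
      using assms(4) by (simp add: n_def \<rho>_def P_def)
    define K1 where "K1 = (1 + \<gamma>) * \<rho>"
    have K1p: "K1 > 0" using assms(3) rp by (simp add: K1_def)
    have hb1: "\<beta> \<ge> 8 * K1 * P"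
    proof -
      have "8 * n / (n - 1) * (1 + \<gamma>) * \<rho> * P = (n / (n - 1)) * (8 * K1 * P)"
        by (simp add: K1_def)
      moreover have "n / (n - 1) \<ge> 1" using n2 by simp
      moreover have "8 * K1 * P \<ge> 0" using K1p P0 by simp
      ultimately have "8 * K1 * P \<le> 8 * n / (n - 1) * (1 + \<gamma>) * \<rho> * P"
        by (metis mult_right_mono mult_1)
      then show ?thesis using hb0 by linarith
    qed
    have bpos: "\<beta> > 0" using hb1 K1p P0 by (smt (verit) mult_pos_pos)
    have hbsq: "\<beta>^2 \<ge> 64 * K1^2 * n^3"
    proof -
      have "(8 * K1 * P)^2 \<le> \<beta>^2" using hb1 K1p P0 by (intro power_mono) auto
      moreover have "(8 * K1 * P)^2 = 64 * K1^2 * n^3" using P2 by (simp add: power_mult_distrib)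
      ultimately show ?thesis by simp
    qed
    have hC: "2 * \<beta> * (1 / (4 * n)) \<ge> (C + 1) * \<rho>"
    proof -
      have "(C + 1) * \<rho> * (2 * n) = 8 * n / (n - 1) * (1 + \<gamma>) * \<rho> * P"
        using n2 by (simp add: C_def P_def field_simps)
      then have "(C + 1) * \<rho> * (2 * n) \<le> \<beta>" using hb0 by simp
      moreover have "2 * \<beta> * (1 / (4 * n)) = \<beta> / (2 * n)" using n2 by simp
      ultimately show ?thesis using n2 by (simp add: pos_le_divide_eq)
    qed
    have sym: "symmetric_mat A" by (rule assms(2))
    have spr: "Max (eigenvalues A) - Min (eigenvalues A) = \<rho>" by (simp add: \<rho>_def spread_def)
    have g2: "\<gamma> / sqrt 2 \<le> \<gamma>"
    proof -
      have "\<gamma> * 1 \<le> \<gamma> * sqrt 2" using assms(3) by (intro mult_left_mono) auto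
      then show ?thesis by (simp add: divide_le_eq)
    qed
    show ?thesis unfolding strict_saddle_def
    proof (intro allI impI)
      fix z :: "real^'n" assume z1: "norm z = 1"
      have zz: "z \<bullet> z = 1" using z1 by (simp add: norm_eq_1)
      define s where "s = (\<Sum>k\<in>UNIV. (z$k)^4)"
      define a where "a = z \<bullet> (A *v z)"
      define e where "e = A *v z - a *\<^sub>R z"
      define w where "w = (\<chi> i. (z$i)^3 - s * z$i)"
      have g: "rgrad A \<beta> z = e + (2 * \<beta>) *\<^sub>R w"
        using grad_eq[OF zz] by (simp add: e_def a_def w_def s_def)
      have hv: "v \<bullet> (A *v v) - a \<ge> - \<rho> \<and> v \<bullet> (A *v v) - a \<le> \<rho>" if "v \<bullet> v = 1" for v
        using rayleigh(1)[OF sym, of v] rayleigh(2)[OF sym, of v] rayleigh(1)[OF sym, of z]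
          rayleigh(2)[OF sym, of z] that zz spr a_def by auto
      have enorm: "norm e \<le> \<rho> / 2"
      proof (cases "e = 0")
        case True then show ?thesis using rp by simp
      next
        case False
        define r where "r = norm e"
        have rp': "r > 0" using False r_def by simp
        have ez: "e \<bullet> z = 0" by (simp add: e_def a_def inner_diff_left inner_diff_right zz inner_commute)
        have Az: "A *v z = e + a *\<^sub>R z" by (simp add: e_def)
        have eAz: "e \<bullet> (A *v z) = r^2"
          unfolding Az by (simp add: inner_add_right ez r_def power2_norm_eq_inner)
        have ee: "e \<bullet> e = r * r" by (simp add: r_def dot_square_norm power2_eq_square)
        define x where "x = r *\<^sub>R z + e"
        define y where "y = r *\<^sub>R z - e"
        have xx: "x \<bullet> x = 2 * r^2"
          by (simp add: x_def inner_add_left inner_add_right zz ez inner_commute ee power2_eq_square)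
        have yy: "y \<bullet> y = 2 * r^2"
          by (simp add: y_def inner_diff_left inner_diff_right zz ez inner_commute ee power2_eq_square)
        have s1: "z \<bullet> (A *v e) = e \<bullet> (A *v z)" by (rule sym_inner[OF sym])
        have "x \<bullet> (A *v x) - y \<bullet> (A *v y) = 4 * r * (e \<bullet> (A *v z))"
          unfolding x_def y_def using s1
          by (simp add: matrix_vector_right_distrib mv_scale inner_add_left inner_add_right
              inner_diff_left inner_diff_right algebra_simps)
        moreover have "x \<bullet> (A *v x) - y \<bullet> (A *v y) \<le> \<rho> * (2 * r^2)"
        proof -
          have "\<rho> * (2 * r^2) = Max (eigenvalues A) * (2 * r^2) - Min (eigenvalues A) * (2 * r^2)"
            unfolding spr[symmetric] by (simp add: left_diff_distrib)
          then show ?thesis using rayleigh(1)[OF sym, of x, unfolded xx] rayleigh(2)[OF sym, of y, unfolded yy] by linarith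
        qed
        ultimately have "4 * r * r^2 \<le> \<rho> * (2 * r^2)" using eAz by simp
        then have "r * (4 * r^2) \<le> (\<rho> / 2) * (4 * r^2)" by (simp add: algebra_simps)
        then have "r \<le> \<rho> / 2" using rp' by (simp add: mult_le_cancel_right)
        then show ?thesis by (simp add: r_def)
      qed
      show "(\<forall>v. v \<bullet> z = 0 \<and> norm v = 1 \<longrightarrow> C * \<rho> \<le> rhess A \<beta> z v) \<or>
           \<gamma> / sqrt 2 * \<rho> \<le> norm (rgrad A \<beta> z) \<or>
           (\<exists>v. v \<bullet> z = 0 \<and> norm v = 1 \<and> rhess A \<beta> z v \<le> - (C * \<rho>))"
      proof (cases "\<gamma> / sqrt 2 * \<rho> \<le> norm (rgrad A \<beta> z)")
        case True then show ?thesis by simp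
      next
        case gs: False
        have "norm ((2 * \<beta>) *\<^sub>R w) = norm (rgrad A \<beta> z - e)" using g by simp
        also have "\<dots> \<le> norm (rgrad A \<beta> z) + norm e" by (rule norm_triangle_ineq4)
        finally have "2 * \<beta> * norm w < \<gamma> / sqrt 2 * \<rho> + \<rho> / 2"
          using gs enorm bpos by simp
        moreover have "\<gamma> / sqrt 2 * \<rho> \<le> \<gamma> * \<rho>" using mult_right_mono[OF g2, of \<rho>] rp by simp
        ultimately have wb: "2 * \<beta> * norm w < K1" unfolding K1_def using rp by (simp add: algebra_simps)
        have sq1: "(\<Sum>i\<in>UNIV. (z$i)^2) = 1" using zz by (simp add: inner_vec_def power2_eq_square)
        have fin: "finite (range (\<lambda>i. (z$i)^2))" by simp
        obtain j where jmin: "\<And>i. (z$j)^2 \<le> (z$i)^2"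
        proof -
          have "Min (range (\<lambda>i. (z$i)^2)) \<in> range (\<lambda>i. (z$i)^2)" using fin by (intro Min_in) auto
          then obtain j where "Min (range (\<lambda>i. (z$i)^2)) = (z$j)^2" by blast
          then have "\<And>i. (z$j)^2 \<le> (z$i)^2" using fin by (metis Min_le rangeI)
          then show ?thesis using that by blast
        qed
        define t where "t = z$j"
        define \<mu> where "\<mu> = t^2"
        have mu0: "\<mu> \<ge> 0" by (simp add: \<mu>_def)
        have nmu: "n * \<mu> \<le> 1"
        proof -
          have "(\<Sum>i\<in>(UNIV::'n set). \<mu>) \<le> (\<Sum>i\<in>UNIV. (z$i)^2)" by (rule sum_mono) (use jmin in \<open>simp add: \<mu>_def t_def\<close>)
          then show ?thesis using sq1 by (simp add: n_def)
        qed
        have mu2: "\<mu> \<le> 1/2"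
        proof -
          have "2 * \<mu> \<le> n * \<mu>" using n2 mu0 by (intro mult_right_mono) auto
          then show ?thesis using nmu by simp
        qed
        have s1: "s \<le> 1"
        proof -
          have "(z$i)^4 \<le> (z$i)^2" for i
          proof -
            have "(z$i)^2 \<le> 1" using sq1 member_le_sum[of i UNIV "\<lambda>i. (z$i)^2"] by simp
            then have "(z$i)^2 * (z$i)^2 \<le> 1 * (z$i)^2" by (intro mult_right_mono) auto
            then show ?thesis by (simp add: power2_eq_square power4_eq_xxxx)
          qed
          then have "s \<le> (\<Sum>i\<in>UNIV. (z$i)^2)" unfolding s_def by (intro sum_mono) auto
          then show ?thesis using sq1 by simp
        qed
        have sn: "s \<ge> 1/n"
        proof -
          have "0 \<le> (\<Sum>i\<in>UNIV. ((z$i)^2 - 1/n)^2)" by (simp add: sum_nonneg)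
          also have "(\<Sum>i\<in>UNIV. ((z$i)^2 - 1/n)^2) = (\<Sum>i\<in>UNIV. (z$i)^4 - (2/n) * (z$i)^2 + (1/n)^2)"
            by (intro sum.cong) (simp_all add: power2_eq_square power4_eq_xxxx algebra_simps)
          also have "\<dots> = s - (2/n) * (\<Sum>i\<in>UNIV. (z$i)^2) + n * (1/n)^2"
            by (simp add: s_def sum.distrib sum_subtractf sum_distrib_left n_def)
          also have "\<dots> = s - 1/n" using sq1 n2 by (simp add: power2_eq_square field_simps)
          finally show ?thesis by simp
        qed
        have wj: "(w$j)^2 = \<mu> * (\<mu> - s)^2"
          by (simp add: w_def \<mu>_def t_def power2_eq_square power3_eq_cube algebra_simps)
        have wjb: "4 * \<beta>^2 * (\<mu> * (\<mu> - s)^2) < K1^2"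
        proof -
          have "\<bar>w$j\<bar> \<le> norm w" by (rule component_le_norm_cart)
          then have "2 * \<beta> * \<bar>w$j\<bar> \<le> 2 * \<beta> * norm w" using bpos by simp
          then have "2 * \<beta> * \<bar>w$j\<bar> < K1" using wb by simp
          then have "(2 * \<beta> * \<bar>w$j\<bar>)^2 < K1^2" using bpos
            by (intro power_strict_mono) auto
          then show ?thesis using wj by (simp add: power_mult_distrib)
        qed
        consider (pos) "3 * \<mu> - s \<ge> 1/(4*n)" | (neg) "6 * \<mu> - s \<le> -1/(4*n)"
          | (mid) "3 * \<mu> - s < 1/(4*n)" "6 * \<mu> - s > -1/(4*n)" by linarith
        then show ?thesis
        proof cases
          case mid
          have "K1^2 > 0" using K1p by simp
          then have False using gap[OF n2 mu0 sn mid(2) mid(1) wjb hbsq] by simp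
          then show ?thesis by simp
        next
          case pos
          have "\<forall>v. v \<bullet> z = 0 \<and> norm v = 1 \<longrightarrow> C * \<rho> \<le> rhess A \<beta> z v"
          proof (intro allI impI)
            fix v :: "real^'n" assume v: "v \<bullet> z = 0 \<and> norm v = 1"
            then have vv: "v \<bullet> v = 1" by (simp add: norm_eq_1)
            have "(\<Sum>i\<in>UNIV. \<mu> * (v$i)^2) \<le> (\<Sum>i\<in>UNIV. (z$i)^2 * (v$i)^2)"
              by (rule sum_mono, rule mult_right_mono) (use jmin in \<open>auto simp: \<mu>_def t_def\<close>)
            moreover have "(\<Sum>i\<in>UNIV. \<mu> * (v$i)^2) = \<mu>"
              using vv by (simp add: sum_distrib_left[symmetric] inner_vec_def power2_eq_square)
            ultimately have "3 * (\<Sum>i\<in>UNIV. (z$i)^2 * (v$i)^2) - s \<ge> 1/(4*n)" using pos by linarith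
            then have "2 * \<beta> * (3 * (\<Sum>i\<in>UNIV. (z$i)^2 * (v$i)^2) - s) \<ge> 2 * \<beta> * (1/(4*n))"
              using bpos by (intro mult_left_mono) auto
            moreover have "rhess A \<beta> z v = (v \<bullet> (A *v v) - a) + 2 * \<beta> * (3 * (\<Sum>i\<in>UNIV. (z$i)^2 * (v$i)^2) - s)"
              using hess_eq[OF vv] by (simp add: a_def s_def)
            moreover have "v \<bullet> (A *v v) - a \<ge> - \<rho>" using hv[OF vv] by simp
            ultimately show "C * \<rho> \<le> rhess A \<beta> z v" using hC by (simp add: algebra_simps)
          qed
          then show ?thesis by simp
        next
          case neg
          define r where "r = sqrt (1 - \<mu>)"
          have r2: "r^2 = 1 - \<mu>" using mu2 by (simp add: r_def)
          have rp2: "r > 0" using mu2 by (simp add: r_def)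
          define D where "D k = (if k = j then 1 else 0) - t * z$k" for k
          define v where "v = (\<chi> k. D k / r)"
          have Dz: "(\<Sum>k\<in>UNIV. D k * z$k) = 0"
            using delta_sum[of j t z "\<lambda>k. z$k"] sq1 unfolding D_def by (simp add: t_def power2_eq_square)
          have DD: "(\<Sum>k\<in>UNIV. D k * D k) = 1 - \<mu>"
          proof -
            have "(\<Sum>k\<in>UNIV. D k * D k) = D j - t * (\<Sum>k\<in>UNIV. z$k * D k)"
              using delta_sum[of j t z D] unfolding D_def by simp
            also have "(\<Sum>k\<in>UNIV. z$k * D k) = 0" using Dz by (simp add: mult.commute)
            finally show ?thesis by (simp add: D_def \<mu>_def t_def power2_eq_square)
          qed
          have Dz3: "(\<Sum>k\<in>UNIV. D k * (z$k)^3) = t^3 - t * s"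
            using delta_sum[of j t z "\<lambda>k. (z$k)^3"] unfolding D_def
            by (simp add: t_def s_def power3_eq_cube power4_eq_xxxx mult.assoc)
          have DDz: "(\<Sum>k\<in>UNIV. D k * (D k * (z$k)^2)) = \<mu> - 2 * \<mu>^2 + \<mu> * s"
          proof -
            have "(\<Sum>k\<in>UNIV. D k * (D k * (z$k)^2)) = D j * (z$j)^2 - t * (\<Sum>k\<in>UNIV. z$k * (D k * (z$k)^2))"
              using delta_sum[of j t z "\<lambda>k. D k * (z$k)^2"] unfolding D_def by simp
            also have "(\<Sum>k\<in>UNIV. z$k * (D k * (z$k)^2)) = t^3 - t * s"
              using Dz3 by (simp add: power3_eq_cube power2_eq_square algebra_simps)
            finally show ?thesis
              by (simp add: D_def \<mu>_def t_def power2_eq_square power3_eq_cube algebra_simps)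
          qed
          have vz: "v \<bullet> z = 0"
          proof -
            have "v \<bullet> z = (\<Sum>k\<in>UNIV. D k * z$k) / r"
              by (simp add: v_def inner_vec_def sum_divide_distrib)
            then show ?thesis using Dz by simp
          qed
          have vv: "v \<bullet> v = 1"
          proof -
            have "v \<bullet> v = (\<Sum>k\<in>UNIV. D k * D k) / r^2"
              by (simp add: v_def inner_vec_def sum_divide_distrib power2_eq_square)
            then show ?thesis using DD r2 mu2 by simp
          qed
          have Sv: "(\<Sum>i\<in>UNIV. (z$i)^2 * (v$i)^2) = (\<mu> - 2 * \<mu>^2 + \<mu> * s) / (1 - \<mu>)"
          proof -
            have "(\<Sum>i\<in>UNIV. (z$i)^2 * (v$i)^2) = (\<Sum>k\<in>UNIV. D k * (D k * (z$k)^2)) / r^2"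
              by (simp add: v_def sum_divide_distrib power2_eq_square algebra_simps)
            then show ?thesis using DDz r2 by simp
          qed
          have "\<mu> - 2 * \<mu>^2 + \<mu> * s \<le> 2 * \<mu> * (1 - \<mu>)"
          proof -
            have "\<mu> * s \<le> \<mu> * 1" using s1 mu0 by (intro mult_left_mono) auto
            then show ?thesis by (simp add: power2_eq_square algebra_simps)
          qed
          then have "(\<Sum>i\<in>UNIV. (z$i)^2 * (v$i)^2) \<le> 2 * \<mu>"
            unfolding Sv using mu2 by (simp add: divide_le_eq)
          then have Q: "3 * (\<Sum>i\<in>UNIV. (z$i)^2 * (v$i)^2) - s \<le> - (1/(4*n))" using neg by linarith
          have "2 * \<beta> * (3 * (\<Sum>i\<in>UNIV. (z$i)^2 * (v$i)^2) - s) \<le> 2 * \<beta> * (- (1/(4*n)))"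
            using bpos Q by (intro mult_left_mono) auto
          moreover have "rhess A \<beta> z v = (v \<bullet> (A *v v) - a) + 2 * \<beta> * (3 * (\<Sum>i\<in>UNIV. (z$i)^2 * (v$i)^2) - s)"
            using hess_eq[OF vv] by (simp add: a_def s_def)
          moreover have "v \<bullet> (A *v v) - a \<le> \<rho>" using hv[OF vv] by simp
          ultimately have "rhess A \<beta> z v \<le> - (C * \<rho>)" using hC by (simp add: algebra_simps)
          moreover have "norm v = 1" using vv by (simp add: norm_eq_1)
          ultimately show ?thesis using vz by blast
        qed
      qed
    qed
  qed
  then show ?thesis by (simp add: n_def \<rho>_def C_def Let_def)
qed

end
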